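(* Let $d\in\{2,3\}$, $R>0$, and let $m_\pm>0$, $\rho_\pm>0$, $\alpha>0$, $S_I\in\mathbb{R}$ be given, with $\lambda_\pm=\sqrt{\rho_\pm/m_\pm}$. For $q\in(0,R)$ define \[ \mathcal H(q)=-m_+\lambda_+\Big(\alpha\frac{d-1}{q}-\frac{S_+}{\rho_+}\Big)\frac{\mathbb I_1(\lambda_+q)}{\mathbb I_0(\lambda_+q)} +m_-\lambda_-\Big(\alpha\frac{d-1}{q}-\frac{S_-}{\rho_-}\Big)\frac{\mathbb I_1(\lambda_-q)\frac{\mathbb K_1(\lambda_-R)}{\mathbb I_1(\lambda_-R)}-\mathbb K_1(\lambda_-q)}{\mathbb I_0(\lambda_-q)\frac{\mathbb K_1(\lambda_-R)}{\mathbb I_1(\lambda_-R)}+\mathbb K_0(\lambda_-q)}+S_I . \] Then there exist a constant $d_{+,*}<0$ which does not depend on $\frac{S_+}{\rho_+}$ and $\frac{S_-}{\rho_-}$, and a constant $d_{-,*}>0$ which does not depend on $\frac{S_-}{\rho_-}$, such that for all $\frac{S_+}{\rho_+}<d_{+,*}$ and $\frac{S_-}{\rho_-}>d_{-,*}$ the function $\mathcal H$ has at least two distinct roots in $(0,R)$. Furthermore, at least one root is unstable with respect to radial perturbations, while at least one other root is stable with respect to radial perturbations. If $\mathcal H$ has exactly two roots, then the smaller root is unstable and the larger one is stable.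
   Context: For $d=2$, $\mathbb I_j=I_j$ and $\mathbb K_j=K_j$ are the modified Bessel functions of the first and second kind of order $j$. For $d=3$, $\mathbb I_j=i_j$ and $\mathbb K_j=k_j$ are the spherical modified Bessel functions, in particular $i_0(r)=\sinh(r)/r$, $i_1(r)=(r\cosh r-\sinh r)/r^2$, $k_0(r)=e^{-r}/r$, $k_1(r)=e^{-r}(r+1)/r^2$. The function $\mathcal H$ arises as follows: radially symmetric solutions of the chemically active Mullins--Sekerka problem in the ball $B_R(0)\subset\mathbb R^d$ with droplet $\Omega^+(t)=B_{q(t)}(0)$ have radius evolving according to the ODE $2\dot q=\mathcal H(q)$. A root $q^\star$ of $\mathcal H$ is called stable (resp. unstable) with respect to radial perturbations if it is a stable (resp. unstable) equilibrium of the scalar ODE $2\dot q=\mathcal H(q)$. *)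

theory Defs
  imports "HOL-Analysis.Analysis"
begin

definition besselI :: "nat \<Rightarrow> real \<Rightarrow> real" where
  "besselI n x = (\<Sum>k. (x / 2) ^ (2 * k + n) / (fact k * fact (k + n)))"

definition besselK :: "nat \<Rightarrow> real \<Rightarrow> real" where
  "besselK n x = integral {0..} (\<lambda>t. exp (- x * cosh t) * cosh (real n * t))"

text \<open>Spherical modified Bessel functions of order 0 and 1 (only these orders are used).\<close>

definition sph_i :: "nat \<Rightarrow> real \<Rightarrow> real" where
  "sph_i j r = (if j = 0 then sinh r / r else (r * cosh r - sinh r) / r ^ 2)"

definition sph_k :: "nat \<Rightarrow> real \<Rightarrow> real" where
  "sph_k j r = (if j = 0 then exp (- r) / r else exp (- r) * (r + 1) / r ^ 2)"

text \<open>Dimension-dependent Bessel functions: d = 2 cylindrical, d = 3 spherical.\<close>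

definition BI :: "nat \<Rightarrow> nat \<Rightarrow> real \<Rightarrow> real" where
  "BI d j r = (if d = 2 then besselI j r else sph_i j r)"

definition BK :: "nat \<Rightarrow> nat \<Rightarrow> real \<Rightarrow> real" where
  "BK d j r = (if d = 2 then besselK j r else sph_k j r)"

definition calH :: "nat \<Rightarrow> real \<Rightarrow> real \<Rightarrow> real \<Rightarrow> real \<Rightarrow> real \<Rightarrow> real \<Rightarrow> real
    \<Rightarrow> real \<Rightarrow> real \<Rightarrow> real \<Rightarrow> real" where
  "calH d R mp mm rhop rhom alpha SI Sp Sm q =
    (let lp = sqrt (rhop / mp); lm = sqrt (rhom / mm);
         c = BK d 1 (lm * R) / BI d 1 (lm * R)
     in - mp * lp * (alpha * (real d - 1) / q - Sp / rhop) * (BI d 1 (lp * q) / BI d 0 (lp * q))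
        + mm * lm * (alpha * (real d - 1) / q - Sm / rhom)
            * ((BI d 1 (lm * q) * c - BK d 1 (lm * q)) / (BI d 0 (lm * q) * c + BK d 0 (lm * q)))
        + SI)"

definition radial_solution :: "(real \<Rightarrow> real) \<Rightarrow> real \<Rightarrow> (real \<Rightarrow> real) \<Rightarrow> real \<Rightarrow> bool" where
  "radial_solution H R q T \<longleftrightarrow> T > 0 \<and>
     (\<forall>t\<in>{0..<T}. q t \<in> {0<..<R} \<and> (q has_real_derivative (H (q t) / 2)) (at t within {0..<T}))"

definition ode_stable :: "(real \<Rightarrow> real) \<Rightarrow> real \<Rightarrow> real \<Rightarrow> bool" where
  "ode_stable H R qs \<longleftrightarrow> (\<forall>\<epsilon>>0. \<exists>\<delta>>0. \<forall>q T. radial_solution H R q T \<and> \<bar>q 0 - qs\<bar> < \<delta>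
       \<longrightarrow> (\<forall>t\<in>{0..<T}. \<bar>q t - qs\<bar> < \<epsilon>))"

definition ode_unstable :: "(real \<Rightarrow> real) \<Rightarrow> real \<Rightarrow> real \<Rightarrow> bool" where
  "ode_unstable H R qs \<longleftrightarrow> \<not> ode_stable H R qs"

end

theory Submission
  imports Defs "HOL-Real_Asymp.Real_Asymp"
begin


lemma exp_neg_cube_bound:
  fixes z :: real assumes "z > 0" shows "exp (- z) \<le> 27 / z ^ 3"
proof -
  have "z / 3 \<le> exp (z/3)" using exp_ge_add_one_self[of "z/3"] by linarith
  hence "(z/3)^3 \<le> exp (z/3) ^ 3" using assms by (intro power_mono) auto
  also have "exp (z/3) ^ 3 = exp z" by (simp add: exp_of_nat_mult[symmetric])
  finally have "z^3 \<le> 27 * exp z" by (simp add: power_divide)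
  thus ?thesis using assms by (simp add: exp_minus field_simps)
qed

lemma expcosh_bound:
  fixes x t :: real assumes "x > 0"
  shows "exp (- x * cosh t) * cosh t * cosh t \<le> (54 / x ^ 3) * exp (- 1 * t)"
proof -
  have c1: "cosh t \<ge> 1" by (rule cosh_real_ge_1)
  have c2: "cosh t \<ge> exp t / 2" unfolding cosh_def using exp_gt_zero[of "-t"] by (simp add: divide_simps)
  have "exp (- x * cosh t) \<le> 27 / (x * cosh t) ^ 3"
    using exp_neg_cube_bound[of "x * cosh t"] assms c1 by (simp add: mult_pos_pos)
  hence "exp (- x * cosh t) * cosh t * cosh t \<le> 27 / (x * cosh t) ^ 3 * cosh t * cosh t"
    using c1 by (intro mult_right_mono) auto
  also have "\<dots> = 27 / (x^3 * cosh t)" using c1 assms by (simp add: field_simps power3_eq_cube)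
  also have "\<dots> \<le> 27 / (x^3 * (exp t / 2))"
    using c2 assms by (intro divide_left_mono mult_left_mono mult_pos_pos) auto
  also have "\<dots> = (54 / x ^ 3) * exp (- 1 * t)" using assms by (simp add: exp_minus field_simps)
  finally show ?thesis .
qed

lemma lebesgue_atLeast: "{0::real..} \<in> sets lebesgue" by simp

lemma K_int2:
  fixes x :: real assumes "x > 0"
  shows "(\<lambda>t. exp (- x * cosh t) * cosh t * cosh t) integrable_on {0..}"
proof (rule measurable_bounded_by_integrable_imp_integrable_real)
  show "(\<lambda>t. exp (- x * cosh t) * cosh t * cosh t) \<in> borel_measurable (lebesgue_on {0..})"
    by (intro continuous_imp_measurable_on_sets_lebesgue continuous_intros) auto
  show "(\<lambda>t. (54 / x ^ 3) * exp (- 1 * t)) integrable_on {0..}"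
    using integrable_on_cmult_left[OF integrable_on_exp_minus_to_infinity[of 1 0], of "54 / x ^ 3"] by simp
  show "\<bar>exp (- x * cosh t) * cosh t * cosh t\<bar> \<le> (54 / x ^ 3) * exp (- 1 * t)" for t
    using expcosh_bound[OF assms, of t] by simp
qed auto

lemma K_int:
  fixes x :: real assumes "x > 0" "n \<le> 1"
  shows "(\<lambda>t. exp (- x * cosh t) * cosh (real n * t)) integrable_on {0..}"
proof (rule measurable_bounded_by_integrable_imp_integrable_real)
  show "(\<lambda>t. exp (- x * cosh t) * cosh (real n * t)) \<in> borel_measurable (lebesgue_on {0..})"
    by (intro continuous_imp_measurable_on_sets_lebesgue continuous_intros) auto
  show "(\<lambda>t. exp (- x * cosh t) * cosh t * cosh t) integrable_on {0..}" by (rule K_int2[OF assms(1)])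
  show "\<bar>exp (- x * cosh t) * cosh (real n * t)\<bar> \<le> exp (- x * cosh t) * cosh t * cosh t" for t
  proof -
    have "cosh (real n * t) \<le> cosh t * cosh t" using assms(2)
      by (cases n) (auto intro: order_trans[of _ "cosh t"] simp: cosh_real_ge_1)
    thus ?thesis by (simp add: abs_mult)
  qed
qed auto

lemma K_lower:
  fixes x b :: real assumes "x > 0" "b \<ge> 0" "n \<le> 1"
  shows "b * exp (- x * cosh b) \<le> besselK n x"
proof -
  let ?f = "\<lambda>t. exp (- x * cosh t) * cosh (real n * t)"
  have "b * exp (- x * cosh b) = integral {0..b} (\<lambda>t. exp (- x * cosh b))"
    using assms by simp
  also have "\<dots> \<le> integral {0..b} ?f"
  proof (rule integral_le)
    show "?f integrable_on {0..b}" by (intro integrable_continuous_interval continuous_intros)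
    fix t assume t: "t \<in> {0..b}"
    have "cosh t \<le> cosh b" using t by (simp add: cosh_real_nonneg_le_iff)
    hence "exp (- x * cosh b) \<le> exp (- x * cosh t)" using assms by simp
    also have "\<dots> \<le> ?f t" using mult_left_mono[OF cosh_real_ge_1[of "real n * t"], of "exp (- x * cosh t)"]
      by simp
    finally show "exp (- x * cosh b) \<le> ?f t" .
  qed auto
  also have "\<dots> \<le> integral {0..} ?f"
    by (rule integral_subset_le) (use K_int[OF assms(1,3)] in \<open>auto intro!: integrable_continuous_interval continuous_intros\<close>)
  finally show ?thesis unfolding besselK_def by simp
qed

lemma K_pos: "x > 0 \<Longrightarrow> n \<le> 1 \<Longrightarrow> besselK n x > 0"
  using K_lower[of x 1 n] by (smt (verit) exp_gt_zero)

lemma K0_le_K1: "x > 0 \<Longrightarrow> besselK 0 x \<le> besselK 1 x"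
  unfolding besselK_def
  by (rule integral_le) (use K_int[of x 0] K_int[of x 1] in \<open>auto simp: cosh_real_ge_1\<close>)

lemma exp_diff_bound:
  fixes a b m :: real assumes "a \<ge> m" "b \<ge> m"
  shows "\<bar>exp (- a) - exp (- b)\<bar> \<le> \<bar>a - b\<bar> * exp (- m)"
proof -
  have *: "exp (- a) - exp (- b) \<le> (b - a) * exp (- m)" if "a \<le> b" "a \<ge> m" for a b
  proof -
    have e1: "exp (- a) - exp (- b) = exp (- a) * (1 - exp (a - b))" by (simp add: algebra_simps exp_diff exp_minus field_simps)
    have "1 - exp (a - b) \<le> b - a" using exp_ge_add_one_self[of "a - b"] by linarith
    hence "exp (- a) * (1 - exp (a - b)) \<le> exp (- a) * (b - a)" by (intro mult_left_mono) auto
    hence "exp (- a) - exp (- b) \<le> exp (- a) * (b - a)" using e1 by simp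
    also have "\<dots> \<le> exp (- m) * (b - a)" using that by (intro mult_right_mono) auto
    finally show ?thesis by (simp only: mult.commute)
  qed
  show ?thesis
  proof (cases "a \<le> b")
    case True thus ?thesis using *[of a b] assms by (simp add: abs_if)
  next
    case False thus ?thesis using *[of b a] assms by (simp add: abs_if)
  qed
qed

lemma K_lip:
  fixes x y m :: real assumes "m > 0" "x \<ge> m" "y \<ge> m" "n \<le> 1"
  shows "\<bar>besselK n x - besselK n y\<bar> \<le> \<bar>x - y\<bar> * integral {0..} (\<lambda>t. exp (- m * cosh t) * cosh t * cosh t)"
proof -
  have xp: "x > 0" "y > 0" using assms by auto
  have "besselK n x - besselK n y = integral {0..} (\<lambda>t. exp (- x * cosh t) * cosh (real n * t) - exp (- y * cosh t) * cosh (real n * t))"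
    unfolding besselK_def by (rule integral_diff[symmetric]) (use K_int xp assms in auto)
  also have "\<bar>\<dots>\<bar> \<le> integral {0..} (\<lambda>t. \<bar>x - y\<bar> * (exp (- m * cosh t) * cosh t * cosh t))"
  proof (subst real_norm_def[symmetric], rule integral_norm_bound_integral)
    show "(\<lambda>t. exp (- x * cosh t) * cosh (real n * t) - exp (- y * cosh t) * cosh (real n * t)) integrable_on {0..}"
      by (intro integrable_diff K_int xp assms)
    show "(\<lambda>t. \<bar>x - y\<bar> * (exp (- m * cosh t) * cosh t * cosh t)) integrable_on {0..}"
      using integrable_on_cmult_left[OF K_int2[OF assms(1)], of "\<bar>x - y\<bar>"] by simp
    fix t :: real assume "t \<in> {0..}"
    have c1: "cosh t \<ge> 1" by (rule cosh_real_ge_1)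
    have cn: "0 \<le> cosh (real n * t)" "cosh (real n * t) \<le> cosh t" using assms(4) c1
      by (cases n; auto)+
    have "\<bar>exp (- x * cosh t) - exp (- y * cosh t)\<bar> \<le> \<bar>x * cosh t - y * cosh t\<bar> * exp (- (m * cosh t))"
      using exp_diff_bound[of "m * cosh t" "x * cosh t" "y * cosh t"] assms c1
      by (simp add: mult_right_mono)
    also have "\<dots> = \<bar>x - y\<bar> * cosh t * exp (- m * cosh t)" using c1 by (simp add: abs_mult left_diff_distrib[symmetric])
    finally have e: "\<bar>exp (- x * cosh t) - exp (- y * cosh t)\<bar> \<le> \<bar>x - y\<bar> * cosh t * exp (- m * cosh t)" .
    have "\<bar>exp (- x * cosh t) * cosh (real n * t) - exp (- y * cosh t) * cosh (real n * t)\<bar>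
        = \<bar>exp (- x * cosh t) - exp (- y * cosh t)\<bar> * cosh (real n * t)"
      using cn by (simp add: abs_mult left_diff_distrib[symmetric])
    also have "\<dots> \<le> (\<bar>x - y\<bar> * cosh t * exp (- m * cosh t)) * cosh t"
      using e cn by (intro mult_mono) auto
    finally show "norm (exp (- x * cosh t) * cosh (real n * t) - exp (- y * cosh t) * cosh (real n * t))
        \<le> \<bar>x - y\<bar> * (exp (- m * cosh t) * cosh t * cosh t)" by (simp add: algebra_simps)
  qed
  also have "\<dots> = \<bar>x - y\<bar> * integral {0..} (\<lambda>t. exp (- m * cosh t) * cosh t * cosh t)" by simp
  finally show ?thesis .
qed

lemma K_cont: "n \<le> 1 \<Longrightarrow> x0 > 0 \<Longrightarrow> isCont (besselK n) x0"
proof -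
  assume n: "n \<le> 1" and x0: "x0 > 0"
  define M where "M = integral {0..} (\<lambda>t. exp (- (x0/2) * cosh t) * cosh t * cosh t)"
  have "((\<lambda>x. besselK n x - besselK n x0) \<longlongrightarrow> 0) (at x0)"
  proof (rule Lim_null_comparison)
    have "eventually (\<lambda>x. x > x0/2) (at x0)"
      using x0 by (intro order_tendstoD(1)[OF tendsto_ident_at]) auto
    thus "eventually (\<lambda>x. norm (besselK n x - besselK n x0) \<le> \<bar>x - x0\<bar> * M) (at x0)"
      by eventually_elim (use K_lip[of "x0/2" _ x0 n] x0 n in \<open>auto simp: M_def\<close>)
    show "((\<lambda>x. \<bar>x - x0\<bar> * M) \<longlongrightarrow> 0) (at x0)"
      by (rule tendsto_eq_intros refl)+ (auto intro!: tendsto_eq_intros)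
  qed
  thus ?thesis unfolding isCont_def by (simp add: LIM_zero_iff)
qed

lemma K1_infty: "filterlim (besselK 1) at_top (at_right 0)"
proof (subst filterlim_at_top, intro allI)
  fix Z :: real
  define b where "b = 3 * (\<bar>Z\<bar> + 1)"
  have b: "b > 0" unfolding b_def by simp
  have cb: "cosh b > 0" using cosh_real_ge_1[of b] by simp
  have "eventually (\<lambda>x. x \<in> {0<..<1 / cosh b}) (at_right 0)"
    using cb by (intro eventually_at_right_real) auto
  thus "eventually (\<lambda>x. Z \<le> besselK 1 x) (at_right 0)"
  proof eventually_elim
    case (elim x)
    hence x: "x > 0" "x * cosh b < 1" using cb by (auto simp: field_simps)
    have "exp (-1) \<le> exp (- x * cosh b)" using x by simp
    moreover have "exp (-1::real) \<ge> 1/3"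
      using exp_le by (simp add: exp_minus field_simps)
    ultimately have "1/3 \<le> exp (- x * cosh b)" by linarith
    hence "b * (1/3) \<le> b * exp (- x * cosh b)" using b by (intro mult_left_mono) auto
    hence "b / 3 \<le> b * exp (- x * cosh b)" by simp
    moreover have "Z \<le> b / 3" unfolding b_def by simp
    ultimately show ?case using K_lower[of x b 1] x b by linarith
  qed
qed



definition Ic :: "nat \<Rightarrow> nat \<Rightarrow> real" where "Ic n k = 1 / (fact k * fact (k + n))"

lemma Ic_summable: "summable (\<lambda>k. Ic n k * y ^ k)"
proof (rule summable_comparison_test'[OF summable_exp[of "\<bar>y\<bar>"]])
  fix k :: nat
  have "fact k \<le> (fact k * fact (k + n) :: real)"
    using fact_ge_1[of "k+n", where 'a=real] by (simp add: mult_le_cancel_left1)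
  hence "Ic n k \<le> inverse (fact k)" unfolding Ic_def
    by (simp add: divide_simps)
  moreover have "Ic n k \<ge> 0" unfolding Ic_def by simp
  ultimately show "norm (Ic n k * y ^ k) \<le> inverse (fact k) * \<bar>y\<bar> ^ k"
    by (simp add: abs_mult power_abs mult_right_mono)
qed

lemma besselI_eq: "besselI n x = (x/2)^n * (\<Sum>k. Ic n k * ((x/2)^2) ^ k)"
proof -
  have "(\<lambda>k. (x / 2) ^ (2 * k + n) / (fact k * fact (k + n))) = (\<lambda>k. (x/2)^n * (Ic n k * ((x/2)^2) ^ k))"
    by (rule ext) (simp add: Ic_def power_add power_mult)
  thus ?thesis unfolding besselI_def using suminf_mult[OF Ic_summable, of "(x/2)^n" n "(x/2)^2"] by simp
qed

lemma Ic_cont: "isCont (\<lambda>y. \<Sum>k. Ic n k * y ^ k) y"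
  by (rule isCont_powser[OF Ic_summable[of n "\<bar>y\<bar> + 1"]]) simp

lemma I_cont: "isCont (besselI n) x"
proof -
  have "isCont (\<lambda>x. (x/2)^n * (\<Sum>k. Ic n k * ((x/2)^2) ^ k)) x"
    by (intro continuous_intros isCont_o2[OF _ Ic_cont]) auto
  thus ?thesis by (simp add: besselI_eq[abs_def])
qed

lemma I_pos: "x > 0 \<Longrightarrow> besselI n x > 0"
proof -
  assume x: "x > 0"
  have "(\<Sum>k. Ic n k * ((x/2)^2) ^ k) > 0"
    by (rule suminf_pos[OF Ic_summable]) (use x in \<open>simp add: Ic_def\<close>)
  thus ?thesis using x by (simp add: besselI_eq)
qed



lemma rcosh_pos: fixes r :: real assumes "r > 0" shows "r * cosh r - sinh r > 0"
proof -
  have "(\<lambda>t. t * cosh t - sinh t) 0 < (\<lambda>t. t * cosh t - sinh t) r"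
  proof (rule DERIV_pos_imp_increasing_open[OF assms])
    fix t :: real assume t: "0 < t" "t < r"
    have "DERIV (\<lambda>t. t * cosh t - sinh t) t :> (1 * cosh t + t * sinh t - cosh t)"
      by (intro derivative_eq_intros) auto
    moreover have "1 * cosh t + t * sinh t - cosh t > 0" using t by simp
    ultimately show "\<exists>y. DERIV (\<lambda>t. t * cosh t - sinh t) t :> y \<and> 0 < y" by blast
  qed (intro continuous_intros)
  thus ?thesis by simp
qed

lemma si_pos: "r > 0 \<Longrightarrow> j \<le> 1 \<Longrightarrow> sph_i j r > 0"
  using rcosh_pos[of r] by (cases j) (auto simp: sph_i_def)

lemma sk_pos: "r > 0 \<Longrightarrow> sph_k j r > 0"
  by (auto simp: sph_k_def)

lemma sk01: "r > 0 \<Longrightarrow> sph_k 0 r \<le> sph_k 1 r"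
  by (auto simp: sph_k_def field_simps power2_eq_square)

lemma si_cont: "r > 0 \<Longrightarrow> isCont (sph_i j) r"
proof -
  assume r: "r > 0"
  have "isCont (\<lambda>r. if j = 0 then sinh r / r else (r * cosh r - sinh r) / r ^ 2) r"
    using r by (cases "j = 0") (auto intro!: continuous_intros)
  thus ?thesis by (simp add: sph_i_def[abs_def])
qed

lemma sk_cont: "r > 0 \<Longrightarrow> isCont (sph_k j) r"
proof -
  assume r: "r > 0"
  have "isCont (\<lambda>r. if j = 0 then exp (- r) / r else exp (- r) * (r + 1) / r ^ 2) r"
    using r by (cases "j = 0") (auto intro!: continuous_intros)
  thus ?thesis by (simp add: sph_k_def[abs_def])
qed

lemma si_lim0: "((\<lambda>x. sph_i 0 x / sph_k 1 x) \<longlongrightarrow> 0) (at_right 0)"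
proof -
  have "((\<lambda>x::real. (sinh x / x) / (exp (- x) * (x + 1) / x ^ 2)) \<longlongrightarrow> 0) (at_right 0)"
    by real_asymp
  thus ?thesis by (simp add: sph_i_def sph_k_def)
qed

lemma si_lim1: "((\<lambda>x. sph_i 1 x / sph_k 1 x) \<longlongrightarrow> 0) (at_right 0)"
proof -
  have "((\<lambda>x::real. ((x * cosh x - sinh x) / x ^ 2) / (exp (- x) * (x + 1) / x ^ 2)) \<longlongrightarrow> 0) (at_right 0)"
    by real_asymp
  thus ?thesis by (simp add: sph_i_def sph_k_def)
qed



lemma last_point:
  fixes q :: "real \<Rightarrow> real"
  assumes cont: "continuous_on {0..t2} q" and t2: "0 \<le> t2" and q0: "q 0 \<le> c" and qt: "q t2 > c"
  shows "\<exists>t1\<in>{0..<t2}. q t1 = c \<and> (\<forall>t\<in>{t1<..t2}. q t > c)"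
proof -
  define S where "S = {0..t2} \<inter> q -` {..c}"
  have "closed S" unfolding S_def by (rule continuous_closed_preimage[OF cont]) auto
  moreover have "bounded S" unfolding S_def by (rule bounded_subset[of "{0..t2}"]) auto
  ultimately have "compact S" by (simp add: compact_eq_bounded_closed)
  moreover have "0 \<in> S" using t2 q0 unfolding S_def by auto
  ultimately obtain t1 where t1: "t1 \<in> S" "\<And>t. t \<in> S \<Longrightarrow> t \<le> t1"
    using compact_attains_sup[of S] by blast
  have t1r: "0 \<le> t1" "t1 \<le> t2" "q t1 \<le> c" using t1 unfolding S_def by auto
  have ne: "t1 \<noteq> t2" using t1r qt by auto
  have after: "\<forall>t\<in>{t1<..t2}. q t > c"
  proof
    fix t assume t: "t \<in> {t1<..t2}"
    show "q t > c"
    proof (rule ccontr)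
      assume "\<not> q t > c"
      hence "t \<in> S" using t t1r unfolding S_def by auto
      thus False using t1(2)[of t] t by auto
    qed
  qed
  have "q t1 = c"
  proof (rule ccontr)
    assume "q t1 \<noteq> c"
    hence lt: "q t1 < c" using t1r by auto
    obtain s where s: "t1 \<le> s" "s \<le> t2" "q s = c"
      using IVT'[of q t1 c t2] lt qt t1r continuous_on_subset[OF cont, of "{t1..t2}"] by auto
    have "s \<noteq> t1" using s lt by auto
    thus False using after s by auto
  qed
  thus ?thesis using t1r ne after by auto
qed

lemma rs_cont: "radial_solution H R q T \<Longrightarrow> continuous_on {0..<T} q"
  unfolding radial_solution_def continuous_on_eq_continuous_within
  by (auto intro: DERIV_continuous)

lemma rs_deriv: "radial_solution H R q T \<Longrightarrow> t \<in> {0<..<T} \<Longrightarrow> DERIV q t :> H (q t) / 2"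
proof -
  assume rs: "radial_solution H R q T" and t: "t \<in> {0<..<T}"
  hence "(q has_real_derivative H (q t) / 2) (at t within {0..<T})" unfolding radial_solution_def by auto
  moreover have "at t within {0..<T} = at t" using t by (intro at_within_interior) auto
  ultimately show ?thesis by simp
qed

lemma stable_crit:
  fixes H :: "real \<Rightarrow> real"
  assumes b: "0 < b" "b < R"
    and left: "\<And>e. e > 0 \<Longrightarrow> \<exists>u. b - e < u \<and> u < b \<and> 0 < u \<and> H u > 0"
    and right: "\<And>v. b < v \<Longrightarrow> v < R \<Longrightarrow> H v \<le> 0"
  shows "ode_stable H R b"
  unfolding ode_stable_def
proof (intro allI impI)
  fix e :: real assume e: "e > 0"
  obtain u where u: "b - e < u" "u < b" "0 < u" "H u > 0" using left[OF e] by blast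
  define v where "v = b + min e (R - b) / 2"
  have v: "b < v" "v < R" "v - b < e" using e b unfolding v_def min_def by (auto simp: field_simps)
  define \<delta> where "\<delta> = min (b - u) (v - b)"
  have \<delta>: "\<delta> > 0" using u v unfolding \<delta>_def by auto
  have main: "\<forall>t\<in>{0..<T}. \<bar>q t - b\<bar> < e" if rs: "radial_solution H R q T" and q0: "\<bar>q 0 - b\<bar> < \<delta>" for q T
  proof
    fix t assume t: "t \<in> {0..<T}"
    have T: "T > 0" using rs unfolding radial_solution_def by auto
    have q0': "u < q 0" "q 0 < v" using q0 unfolding \<delta>_def by auto
    have cont: "continuous_on {0..t} q" using rs_cont[OF rs] by (rule continuous_on_subset) (use t in auto)
    have range: "\<And>s. s \<in> {0..<T} \<Longrightarrow> 0 < q s \<and> q s < R" using rs unfolding radial_solution_def by auto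
    have up: "q t \<le> v"
    proof (rule ccontr)
      assume "\<not> q t \<le> v"
      then obtain t1 where t1: "t1 \<in> {0..<t}" "q t1 = v" "\<forall>s\<in>{t1<..t}. q s > v"
        using last_point[OF cont, of v] t q0' by force
      have "q t \<le> q t1"
      proof (rule DERIV_nonpos_imp_decreasing_open[of t1 t q])
        show "t1 \<le> t" using t1 by auto
        show "continuous_on {t1..t} q" by (rule continuous_on_subset[OF cont]) (use t1 in auto)
        fix x assume x: "t1 < x" "x < t"
        have "DERIV q x :> H (q x) / 2" using rs_deriv[OF rs, of x] x t t1 by auto
        moreover have "H (q x) \<le> 0"
        proof (rule right)
          have "x \<in> {0..<T}" using t1(1) x t by auto
          thus "q x < R" using range by blast
          have "x \<in> {t1<..t}" using x by auto
          hence "v < q x" using t1(3) by blast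
          thus "b < q x" using v(1) by linarith
        qed
        ultimately show "\<exists>y. DERIV q x :> y \<and> y \<le> 0" by auto
      qed
      thus False using t1 \<open>\<not> q t \<le> v\<close> by auto
    qed
    have lo: "u \<le> q t"
    proof (rule ccontr)
      assume "\<not> u \<le> q t"
      have cont': "continuous_on {0..t} (\<lambda>s. - q s)" using cont by (intro continuous_intros)
      obtain t1 where t1: "t1 \<in> {0..<t}" "- q t1 = - u" "\<forall>s\<in>{t1<..t}. - q s > - u"
        using last_point[OF cont', of "-u"] t q0' \<open>\<not> u \<le> q t\<close> by force
      have "(q has_real_derivative H (q t1) / 2) (at t1 within {0..<T})"
        using rs t1 t unfolding radial_solution_def by auto
      moreover have "H (q t1) / 2 > 0" using t1 u by auto
      ultimately obtain d where d: "d > 0" "\<And>h. h > 0 \<Longrightarrow> t1 + h \<in> {0..<T} \<Longrightarrow> h < d \<Longrightarrow> q t1 < q (t1 + h)"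
        using has_real_derivative_pos_inc_right by blast
      define h where "h = min (d/2) (t - t1)"
      have h: "h > 0" "h < d" "t1 + h \<in> {0..<T}" "t1 + h \<in> {t1<..t}" using d t1 t unfolding h_def by auto
      have "q t1 < q (t1 + h)" using d(2)[OF h(1) h(3) h(2)] .
      moreover have "q (t1 + h) < u" using t1(3) h(4) by auto
      ultimately show False using t1(2) by auto
    qed
    show "\<bar>q t - b\<bar> < e" using up lo u v by auto
  qed
  show "\<exists>\<delta>>0. \<forall>q T. radial_solution H R q T \<and> \<bar>q 0 - b\<bar> < \<delta> \<longrightarrow> (\<forall>t\<in>{0..<T}. \<bar>q t - b\<bar> < e)"
    using \<delta> main by blast
qed

lemma unstable_crit:
  fixes H :: "real \<Rightarrow> real"
  assumes a: "0 < a" "a < p" "p < R" and contH: "continuous_on {a..p} H"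
    and pos: "\<And>x. a < x \<Longrightarrow> x \<le> p \<Longrightarrow> H x > 0"
  shows "ode_unstable H R a"
  unfolding ode_unstable_def
proof
  assume st: "ode_stable H R a"
  define e where "e = (p - a) / 2"
  have e: "e > 0" using a unfolding e_def by auto
  obtain \<delta> where \<delta>: "\<delta> > 0" and stab: "\<And>q T. radial_solution H R q T \<Longrightarrow> \<bar>q 0 - a\<bar> < \<delta> \<Longrightarrow> \<forall>t\<in>{0..<T}. \<bar>q t - a\<bar> < e"
    using st e unfolding ode_stable_def by meson
  define m where "m = min \<delta> e"
  have m: "m > 0" "m \<le> \<delta>" "m \<le> e" using \<delta> e unfolding m_def by auto
  define y1 where "y1 = a + m / 4"
  define y0 where "y0 = a + m / 2"
  define c where "c = a + e"
  have ys: "a < y1" "y1 < y0" "y0 < c" "c < p" using m a unfolding y1_def y0_def c_def e_def by (auto simp: field_simps)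
  have Hpos: "\<And>x. y1 \<le> x \<Longrightarrow> x \<le> p \<Longrightarrow> H x > 0" using pos ys by auto
  have contG: "continuous_on {y1..p} (\<lambda>s. 2 / H s)"
    using Hpos by (intro continuous_intros continuous_on_subset[OF contH]) (use ys in \<open>auto simp: less_imp_neq[symmetric]\<close>)
  define \<Phi> where "\<Phi> x = integral {y1..x} (\<lambda>s. 2 / H s)" for x
  have D1: "(\<Phi> has_real_derivative 2 / H x) (at x within {y1..p})" if "x \<in> {y1..p}" for x
    unfolding \<Phi>_def[abs_def] by (rule integral_has_real_derivative[OF contG that])
  have D2: "DERIV \<Phi> x :> 2 / H x" if "x \<in> {y1<..<p}" for x
  proof -
    have "at x within {y1..p} = at x" using that by (intro at_within_interior) auto
    thus ?thesis using D1[of x] that by auto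
  qed
  have contP: "continuous_on {y1..p} \<Phi>"
    unfolding continuous_on_eq_continuous_within using D1 by (meson DERIV_continuous)
  have mono: "\<Phi> x < \<Phi> y" if "y1 \<le> x" "x < y" "y \<le> p" for x y
  proof (rule DERIV_pos_imp_increasing_open[OF that(2)])
    fix z assume "x < z" "z < y"
    thus "\<exists>d. DERIV \<Phi> z :> d \<and> 0 < d" using D2[of z] Hpos[of z] that by auto
  next
    show "continuous_on {x..y} \<Phi>" by (rule continuous_on_subset[OF contP]) (use that in auto)
  qed
  have inj: "inj_on \<Phi> {y1..p}"
  proof (rule inj_onI)
    fix x y assume "x \<in> {y1..p}" "y \<in> {y1..p}" "\<Phi> x = \<Phi> y"
    thus "x = y" using mono[of x y] mono[of y x] by (cases x y rule: linorder_cases) auto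
  qed
  define \<Psi> where "\<Psi> = inv_into {y1..p} \<Phi>"
  have PsiPhi: "\<Psi> (\<Phi> x) = x" if "x \<in> {y1..p}" for x
    unfolding \<Psi>_def using inj that by (rule inv_into_f_f)
  have surj: "\<exists>x\<in>{y1..p}. \<Phi> x = s" if "s \<in> {\<Phi> y1..\<Phi> p}" for s
    using IVT'[of \<Phi> y1 s p] that contP ys by auto
  have img: "\<Phi> ` {y1..p} = {\<Phi> y1..\<Phi> p}"
  proof
    show "\<Phi> ` {y1..p} \<subseteq> {\<Phi> y1..\<Phi> p}"
    proof
      fix s assume "s \<in> \<Phi> ` {y1..p}"
      then obtain x where x: "x \<in> {y1..p}" "s = \<Phi> x" by auto
      have "\<Phi> y1 \<le> \<Phi> x" using mono[of y1 x] x by (cases "x = y1") auto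
      moreover have "\<Phi> x \<le> \<Phi> p" using mono[of x p] x by (cases "x = p") auto
      ultimately show "s \<in> {\<Phi> y1..\<Phi> p}" using x by auto
    qed
    show "{\<Phi> y1..\<Phi> p} \<subseteq> \<Phi> ` {y1..p}" using surj by fast
  qed
  have PhiPsi: "\<Phi> (\<Psi> s) = s" "\<Psi> s \<in> {y1..p}" if "s \<in> {\<Phi> y1..\<Phi> p}" for s
  proof -
    have "s \<in> \<Phi> ` {y1..p}" using that img by auto
    thus "\<Phi> (\<Psi> s) = s" "\<Psi> s \<in> {y1..p}" unfolding \<Psi>_def
      by (rule f_inv_into_f, rule inv_into_into)
  qed
  have contPsi: "continuous_on {\<Phi> y1..\<Phi> p} \<Psi>"
    using continuous_on_inv[OF contP compact_Icc, of \<Psi>] PsiPhi img by auto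
  have Psi_in: "\<Psi> s \<in> {y1<..<p}" if "s \<in> {\<Phi> y1<..<\<Phi> p}" for s
  proof -
    have s: "s \<in> {\<Phi> y1..\<Phi> p}" using that by auto
    have "\<Psi> s \<noteq> y1" using PhiPsi(1)[OF s] that by auto
    moreover have "\<Psi> s \<noteq> p" using PhiPsi(1)[OF s] that by auto
    ultimately show ?thesis using PhiPsi(2)[OF s] by auto
  qed
  have DPsi: "DERIV \<Psi> s :> H (\<Psi> s) / 2" if s: "s \<in> {\<Phi> y1<..<\<Phi> p}" for s
  proof -
    have "DERIV \<Psi> s :> inverse (2 / H (\<Psi> s))"
    proof (rule DERIV_inverse_function[where f=\<Phi> and g=\<Psi> and x=s and a="\<Phi> y1" and b="\<Phi> p"])
      show "DERIV \<Phi> (\<Psi> s) :> 2 / H (\<Psi> s)" using D2 Psi_in[OF s] by auto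
      show "2 / H (\<Psi> s) \<noteq> 0" using Hpos[of "\<Psi> s"] Psi_in[OF s] by auto
      show "\<Phi> y1 < s" "s < \<Phi> p" using s by auto
      show "\<And>y. \<Phi> y1 < y \<Longrightarrow> y < \<Phi> p \<Longrightarrow> \<Phi> (\<Psi> y) = y" using PhiPsi(1) by auto
      show "isCont \<Psi> s" using continuous_on_interior[OF contPsi, of s] s by auto
    qed
    thus ?thesis by simp
  qed
  define q where "q t = \<Psi> (t + \<Phi> y0)" for t
  define T where "T = \<Phi> p - \<Phi> y0"
  have P01: "\<Phi> y1 < \<Phi> y0" "\<Phi> y0 < \<Phi> c" "\<Phi> c < \<Phi> p" using mono ys by auto
  have rs: "radial_solution H R q T"
    unfolding radial_solution_def
  proof (intro conjI ballI)
    show "T > 0" using P01 unfolding T_def by auto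
    fix t assume t: "t \<in> {0..<T}"
    have s: "t + \<Phi> y0 \<in> {\<Phi> y1<..<\<Phi> p}" using t P01 unfolding T_def by auto
    show "q t \<in> {0<..<R}" using Psi_in[OF s] ys a unfolding q_def by auto
    have "DERIV q t :> H (q t) / 2 * 1"
      unfolding q_def by (rule DERIV_chain2[where f=\<Psi> and g="\<lambda>t. t + \<Phi> y0", OF DPsi[OF s]]) (auto intro!: derivative_eq_intros)
    thus "(q has_real_derivative H (q t) / 2) (at t within {0..<T})"
      by (auto intro: has_field_derivative_at_within)
  qed
  have "q 0 = y0" unfolding q_def using PsiPhi[of y0] ys by auto
  hence "\<bar>q 0 - a\<bar> < \<delta>" using m unfolding y0_def by auto
  from stab[OF rs this] have all: "\<forall>t\<in>{0..<T}. \<bar>q t - a\<bar> < e" .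
  define ts where "ts = \<Phi> c - \<Phi> y0"
  have "ts \<in> {0..<T}" using P01 unfolding ts_def T_def by auto
  moreover have "q ts = c" unfolding q_def ts_def using PsiPhi[of c] ys by auto
  ultimately show False using all unfolding c_def using e by force
qed


lemma BI_pos: "d \<in> {2,3} \<Longrightarrow> j \<le> 1 \<Longrightarrow> x > 0 \<Longrightarrow> BI d j x > 0"
  by (auto simp: BI_def I_pos si_pos)

lemma BK_pos: "d \<in> {2,3} \<Longrightarrow> j \<le> 1 \<Longrightarrow> x > 0 \<Longrightarrow> BK d j x > 0"
  by (auto simp: BK_def K_pos sk_pos)

lemma BK01: "d \<in> {2,3} \<Longrightarrow> x > 0 \<Longrightarrow> BK d 0 x \<le> BK d 1 x"
  using K0_le_K1[of x] sk01[of x] by (auto simp: BK_def)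

lemma BI_cont: "d \<in> {2,3} \<Longrightarrow> x > 0 \<Longrightarrow> isCont (BI d j) x"
proof -
  assume d: "d \<in> {2,3}" and x: "x > 0"
  show ?thesis
  proof (cases "d = 2")
    case True
    hence "BI d j = besselI j" by (auto simp: BI_def[abs_def])
    thus ?thesis using I_cont by simp
  next
    case False
    hence "BI d j = sph_i j" by (auto simp: BI_def[abs_def])
    thus ?thesis using si_cont x by simp
  qed
qed

lemma BK_cont: "d \<in> {2,3} \<Longrightarrow> j \<le> 1 \<Longrightarrow> x > 0 \<Longrightarrow> isCont (BK d j) x"
proof -
  assume d: "d \<in> {2,3}" and j: "j \<le> 1" and x: "x > 0"
  show ?thesis
  proof (cases "d = 2")
    case True
    hence "BK d j = besselK j" by (auto simp: BK_def[abs_def])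
    thus ?thesis using K_cont j x by simp
  next
    case False
    hence "BK d j = sph_k j" by (auto simp: BK_def[abs_def])
    thus ?thesis using sk_cont x by simp
  qed
qed

lemma B_lim: "d \<in> {2,3} \<Longrightarrow> j \<le> 1 \<Longrightarrow> ((\<lambda>x. BI d j x / BK d 1 x) \<longlongrightarrow> 0) (at_right 0)"
proof -
  assume d: "d \<in> {2,3}" and j: "j \<le> 1"
  show ?thesis
  proof (cases "d = 2")
    case True
    have "(besselI j \<longlongrightarrow> besselI j 0) (at_right 0)"
      using I_cont[where n=j and x=0] unfolding isCont_def by (rule tendsto_within_subset) auto
    hence "((\<lambda>x. besselI j x / besselK 1 x) \<longlongrightarrow> 0) (at_right 0)"
      by (rule tendsto_divide_0[OF _ filterlim_at_top_imp_at_infinity[OF K1_infty]])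
    thus ?thesis using True by (simp add: BI_def BK_def)
  next
    case False
    thus ?thesis using j si_lim0 si_lim1 by (cases j) (auto simp: BI_def BK_def)
  qed
qed

lemma cont_sign_pos:
  fixes H :: "real \<Rightarrow> real"
  assumes "isCont H x" "H x > 0" shows "\<exists>s>0. \<forall>y. \<bar>y - x\<bar> < s \<longrightarrow> H y > 0"
proof -
  have L: "H \<midarrow>x\<rightarrow> H x" using assms(1) unfolding isCont_def .
  from LIM_D[OF L assms(2)] obtain s where s: "s > 0"
    and hs: "\<forall>y. y \<noteq> x \<and> norm (y - x) < s \<longrightarrow> norm (H y - H x) < H x" by blast
  have "H y > 0" if "\<bar>y - x\<bar> < s" for y
  proof (cases "y = x")
    case True thus ?thesis using assms(2) by simp
  next
    case False
    hence "\<bar>H y - H x\<bar> < H x" using hs that by simp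
    thus ?thesis by linarith
  qed
  thus ?thesis using s by blast
qed

lemma cont_sign_neg:
  fixes H :: "real \<Rightarrow> real"
  assumes "isCont H x" "H x < 0" shows "\<exists>s>0. \<forall>y. \<bar>y - x\<bar> < s \<longrightarrow> H y < 0"
proof -
  have c: "isCont (\<lambda>y. - H y) x" using assms(1) by (intro continuous_intros)
  have p: "- H x > 0" using assms(2) by simp
  obtain s where s: "s > 0" "\<forall>y. \<bar>y - x\<bar> < s \<longrightarrow> - H y > 0"
    using cont_sign_pos[OF c] p by auto
  thus ?thesis by auto
qed

lemma half_lt_self_r: "0 < (w::real) \<Longrightarrow> w / 2 < w" by linarith

theorem lemma3p1:
  fixes d :: nat and R mp mm rhop rhom alpha SI :: real
  assumes "d \<in> {2, 3}" and "R > 0" and "mp > 0" and "mm > 0"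
    and "rhop > 0" and "rhom > 0" and "alpha > 0"
  shows "\<exists>dp < 0. \<forall>Sp. Sp / rhop < dp \<longrightarrow> (\<exists>dm > 0. \<forall>Sm. Sm / rhom > dm \<longrightarrow>
     (let H = calH d R mp mm rhop rhom alpha SI Sp Sm;
          Z = {q \<in> {0<..<R}. H q = 0}
      in (\<exists>a\<in>Z. \<exists>b\<in>Z. a \<noteq> b)
         \<and> (\<exists>a\<in>Z. \<exists>b\<in>Z. a \<noteq> b \<and> ode_unstable H R a \<and> ode_stable H R b)
         \<and> (card Z = 2 \<longrightarrow> (\<forall>a\<in>Z. \<forall>b\<in>Z. a < b \<longrightarrow> ode_unstable H R a \<and> ode_stable H R b))))"
proof -
  note d = assms(1)
  have d1: "real d - 1 > 0" using d by auto
  define lp where "lp = sqrt (rhop / mp)"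
  define lm where "lm = sqrt (rhom / mm)"
  have lp: "lp > 0" and lm: "lm > 0" using assms by (auto simp: lp_def lm_def)
  define L where "L = lm * R"
  define c where "c = BK d 1 L / BI d 1 L"
  have L: "L > 0" using lm assms by (simp add: L_def)
  have c: "c > 0" using BK_pos[OF d, of 1 L] BI_pos[OF d, of 1 L] L by (simp add: c_def)
  define \<kappa> where "\<kappa> = alpha * (real d - 1)"
  have \<kappa>: "\<kappa> > 0" using assms d1 by (simp add: \<kappa>_def)
  define f where "f q = BI d 1 (lp * q) / BI d 0 (lp * q)" for q
  define g where "g q = (BI d 1 (lm * q) * c - BK d 1 (lm * q)) / (BI d 0 (lm * q) * c + BK d 0 (lm * q))" for q
  have Heq: "calH d R mp mm rhop rhom alpha SI Sp Sm q
      = - mp * lp * (\<kappa> / q - Sp / rhop) * f q + mm * lm * (\<kappa> / q - Sm / rhom) * g q + SI" for Sp Sm q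
    by (simp add: calH_def Let_def lp_def lm_def c_def L_def \<kappa>_def f_def g_def)
  have fpos: "f q > 0" if "q > 0" for q
    using BI_pos[OF d, of 1 "lp*q"] BI_pos[OF d, of 0 "lp*q"] lp that by (simp add: f_def)
  have gR: "g R = 0" using BI_pos[OF d, of 1 L] L by (simp add: g_def c_def L_def[symmetric])
  have cI: "isCont (\<lambda>q. BI d j (l * q)) q" if "q > 0" "l > 0" for j l q
    using isCont_o2[where f="\<lambda>q. l * q" and a=q and g="BI d j"] BI_cont[OF d, of "l * q" j] that
    by (auto intro: continuous_intros)
  have cK: "isCont (\<lambda>q. BK d j (l * q)) q" if "q > 0" "l > 0" "j \<le> 1" for j l q
    using isCont_o2[where f="\<lambda>q. l * q" and a=q and g="BK d j"] BK_cont[OF d that(3), of "l * q"] that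
    by (auto intro: continuous_intros)
  have contf: "isCont f q" if "q > 0" for q
  proof -
    have "BI d 0 (lp * q) \<noteq> 0" using BI_pos[OF d, of 0 "lp*q"] lp that by simp
    thus ?thesis unfolding f_def[abs_def] using that lp by (intro continuous_intros cI) auto
  qed
  have contg: "isCont g q" if "q > 0" for q
  proof -
    have "BI d 0 (lm * q) * c + BK d 0 (lm * q) > 0"
      using BI_pos[OF d, of 0 "lm*q"] BK_pos[OF d, of 0 "lm*q"] lm that c by (simp add: add_pos_pos)
    thus ?thesis unfolding g_def[abs_def] using that lm by (intro continuous_intros cI cK) auto
  qed
  have gneg: "g q \<le> - 1/2" if "BI d 1 (lm * q) * c \<le> BK d 1 (lm * q) / 4"
      "BI d 0 (lm * q) * c \<le> BK d 1 (lm * q) / 4" "q > 0" for q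
  proof -
    define x where "x = lm * q"
    have x: "x > 0" using lm that(3) by (simp add: x_def)
    have pos: "BI d 1 x > 0" "BI d 0 x > 0" "BK d 0 x > 0" "BK d 1 x > 0"
      using BI_pos[OF d, of 1 x] BI_pos[OF d, of 0 x] BK_pos[OF d, of 0 x] BK_pos[OF d, of 1 x] x by auto
    have le: "BK d 0 x \<le> BK d 1 x" using BK01[OF d x] .
    have den: "BI d 0 x * c + BK d 0 x > 0" using pos c by (simp add: add_pos_pos)
    have "2 * (BI d 1 x * c) + BI d 0 x * c + BK d 0 x \<le> 2 * BK d 1 x"
      using that(1,2) le pos unfolding x_def[symmetric] by linarith
    hence "(BI d 1 x * c - BK d 1 x) / (BI d 0 x * c + BK d 0 x) \<le> - 1/2"
      using den by (simp add: field_simps)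
    thus ?thesis unfolding g_def x_def .
  qed
  obtain x1 where x1: "x1 > 0" "\<And>q. 0 < q \<Longrightarrow> q < x1 \<Longrightarrow> g q \<le> - 1/2"
  proof -
    have ev: "eventually (\<lambda>x. BI d j x / BK d 1 x < 1 / (4 * c)) (at_right 0)" if "j \<le> 1" for j
      using order_tendstoD(2)[OF B_lim[OF d that], of "1 / (4 * c)"] c by auto
    have "eventually (\<lambda>x. BI d 1 x / BK d 1 x < 1 / (4 * c) \<and> BI d 0 x / BK d 1 x < 1 / (4 * c)) (at_right 0)"
      using eventually_conj[OF ev[of 1] ev[of 0]] by simp
    then obtain b where b: "b > 0" "\<And>y. y > 0 \<Longrightarrow> y < b \<Longrightarrow> BI d 1 y / BK d 1 y < 1 / (4 * c) \<and> BI d 0 y / BK d 1 y < 1 / (4 * c)"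
      unfolding eventually_at_right_field by auto
    have "g q \<le> - 1/2" if q: "0 < q" "q < b / lm" for q
    proof (rule gneg)
      have y: "lm * q > 0" "lm * q < b" using q lm by (auto simp: field_simps)
      have K: "BK d 1 (lm * q) > 0" using BK_pos[OF d, of 1 "lm * q"] y by auto
      have r: "BI d 1 (lm * q) / BK d 1 (lm * q) < 1 / (4 * c)" "BI d 0 (lm * q) / BK d 1 (lm * q) < 1 / (4 * c)"
        using b(2)[OF y] by auto
      show "BI d 1 (lm * q) * c \<le> BK d 1 (lm * q) / 4" using r(1) K c by (simp add: field_simps)
      show "BI d 0 (lm * q) * c \<le> BK d 1 (lm * q) / 4" using r(2) K c by (simp add: field_simps)
      show "q > 0" using q by simp
    qed
    thus ?thesis using that[of "b / lm"] b lm by auto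
  qed
  define fR where "fR = f R"
  have fR: "fR > 0" using fpos assms(2) by (simp add: fR_def)
  define dp where "dp = - (\<bar>SI\<bar> + 1) / (mp * lp * fR)"
  have "0 < (\<bar>SI\<bar> + 1) / (mp * lp * fR)" using fR lp assms(3) by (intro divide_pos_pos) auto
  hence dp: "dp < 0" unfolding dp_def minus_divide_left[symmetric] by linarith
  show ?thesis
  proof (rule exI[of _ dp], rule conjI[OF dp], intro allI impI)
    fix Sp assume Sp: "Sp / rhop < dp"
    define sp where "sp = Sp / rhop"
    have sp: "sp < 0" using Sp dp unfolding sp_def by linarith
    have spfR: "mp * lp * fR * sp < - (\<bar>SI\<bar> + 1)"
    proof -
      have pos: "mp * lp * fR > 0" using fR lp assms(3) by simp
      have "sp < - (\<bar>SI\<bar> + 1) / (mp * lp * fR)" using Sp unfolding sp_def dp_def .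
      hence "sp * (mp * lp * fR) < - (\<bar>SI\<bar> + 1)" using pos by (simp add: field_simps)
      thus ?thesis by (simp add: algebra_simps)
    qed
    define p where "p = min x1 R / 2"
    have p: "0 < p" "p < R" "p < x1" using x1(1) assms(2) unfolding p_def min_def by auto
    have gp: "g p \<le> - 1/2" using x1(2) p by auto
    define A where "A = - mp * lp * (\<kappa> / p - sp) * f p"
    define dm where "dm = \<kappa> / p + 2 * (\<bar>A\<bar> + \<bar>SI\<bar> + 1) / (mm * lm)"
    have dm: "dm > 0" unfolding dm_def using \<kappa> p lm assms(4) by (intro add_pos_pos divide_pos_pos) auto
    show "\<exists>dm>0. \<forall>Sm. dm < Sm / rhom \<longrightarrow>
           (let H = calH d R mp mm rhop rhom alpha SI Sp Sm; Z = {q \<in> {0<..<R}. H q = 0}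
            in (\<exists>a\<in>Z. \<exists>b\<in>Z. a \<noteq> b) \<and> (\<exists>a\<in>Z. \<exists>b\<in>Z. a \<noteq> b \<and> ode_unstable H R a \<and> ode_stable H R b) \<and>
               (card Z = 2 \<longrightarrow> (\<forall>a\<in>Z. \<forall>b\<in>Z. a < b \<longrightarrow> ode_unstable H R a \<and> ode_stable H R b)))"
    proof (rule exI[of _ dm], rule conjI[OF dm], intro allI impI)
      fix Sm assume Sm: "dm < Sm / rhom"
      define sm where "sm = Sm / rhom"
      have sm: "sm > dm" using Sm unfolding sm_def .
      define H where "H = calH d R mp mm rhop rhom alpha SI Sp Sm"
      have Hq: "H q = - mp * lp * (\<kappa> / q - sp) * f q + mm * lm * (\<kappa> / q - sm) * g q + SI" for q
        unfolding H_def Heq sp_def sm_def ..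
      have Hcont: "isCont H q" if "q > 0" for q
      proof -
        have "isCont (\<lambda>q. - mp * lp * (\<kappa> / q - sp) * f q + mm * lm * (\<kappa> / q - sm) * g q + SI) q"
          using that by (intro continuous_intros contf contg) auto
        thus ?thesis unfolding Hq[abs_def] .
      qed
      have contH: "continuous_on {u..v} H" if "u > 0" for u v
        using Hcont that by (intro continuous_at_imp_continuous_on) auto
      have HR: "H R < 0"
      proof -
        have "H R = - mp * lp * (\<kappa> / R) * fR + mp * lp * fR * sp + SI"
          unfolding Hq gR fR_def by (simp add: algebra_simps)
        moreover have "mp * lp * (\<kappa> / R) * fR > 0" using assms(2,3) lp \<kappa> fR by simp
        ultimately show ?thesis using spfR by linarith
      qed
      have Hp: "H p > 0"
      proof -
        define X where "X = \<kappa> / p - sm"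
        have sm2: "sm - \<kappa> / p > 2 * (\<bar>A\<bar> + \<bar>SI\<bar> + 1) / (mm * lm)" using sm unfolding dm_def by linarith
        have pos2: "2 * (\<bar>A\<bar> + \<bar>SI\<bar> + 1) / (mm * lm) > 0" using lm assms(4) by (intro divide_pos_pos) auto
        have X: "X < 0" using sm2 pos2 unfolding X_def by linarith
        have "X * g p \<ge> X * (- 1/2)" using X gp by (intro mult_left_mono_neg) auto
        moreover have "X * (- 1/2) = (sm - \<kappa> / p) / 2" unfolding X_def by (simp add: field_simps)
        ultimately have "X * g p \<ge> (sm - \<kappa> / p) / 2" by linarith
        moreover
        {
          define Q where "Q = (\<bar>A\<bar> + \<bar>SI\<bar> + 1) / (mm * lm)"
          have "2 * Q < sm - \<kappa> / p" using sm2 unfolding Q_def by simp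
          hence "Q < (sm - \<kappa> / p) / 2" by simp
        }
        ultimately have "X * g p > (\<bar>A\<bar> + \<bar>SI\<bar> + 1) / (mm * lm)" by linarith
        hence "mm * lm * (X * g p) > mm * lm * ((\<bar>A\<bar> + \<bar>SI\<bar> + 1) / (mm * lm))"
          using lm assms(4) by (intro mult_strict_left_mono) auto
        hence "mm * lm * (X * g p) > \<bar>A\<bar> + \<bar>SI\<bar> + 1" using lm assms(4) by simp
        moreover have "H p = A + mm * lm * (X * g p) + SI" unfolding Hq A_def X_def by (simp add: algebra_simps)
        ultimately show ?thesis by linarith
      qed
      have smpos: "sm > 0" using sm dm by linarith
      obtain q0 where q0: "0 < q0" "q0 < p" "H q0 < 0"
      proof -
        define K where "K = mm * lm * \<kappa> / 4"
        have K: "K > 0" unfolding K_def using assms(4) lm \<kappa> by simp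
        define q0 where "q0 = min (p / 2) (min (\<kappa> / (2 * sm)) (K / (\<bar>SI\<bar> + 1) / 2))"
        have k2: "\<kappa> / (2 * sm) > 0" using \<kappa> smpos by simp
        have k3: "K / (\<bar>SI\<bar> + 1) > 0" using K by (simp add: add_pos_pos)
        have q0: "0 < q0" "q0 < p" "q0 \<le> \<kappa> / (2 * sm)" "q0 < K / (\<bar>SI\<bar> + 1)"
        proof -
          have k4: "0 < K / (\<bar>SI\<bar> + 1) / 2" by (rule half_gt_zero[OF k3])
          have k5: "0 < p / 2" using p(1) by linarith
          show "0 < q0" unfolding q0_def using k2 k4 k5 by (simp only: min_less_iff_conj)
          have m1: "q0 \<le> p / 2" unfolding q0_def by (rule min.cobounded1)
          have m2: "q0 \<le> min (\<kappa> / (2 * sm)) (K / (\<bar>SI\<bar> + 1) / 2)" unfolding q0_def by (rule min.cobounded2)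
          have m3: "q0 \<le> \<kappa> / (2 * sm)" using m2 min.cobounded1 order_trans by blast
          have m4: "q0 \<le> K / (\<bar>SI\<bar> + 1) / 2" using m2 min.cobounded2 order_trans by blast
          show "q0 < p" using m1 p(1) by linarith
          show "q0 \<le> \<kappa> / (2 * sm)" by (rule m3)
          show "q0 < K / (\<bar>SI\<bar> + 1)" using half_lt_self_r[OF k3] m4 order_le_less_trans by blast
        qed
        have gq0: "g q0 \<le> - 1/2" using x1(2) q0 p by auto
        have "sm \<le> \<kappa> / (2 * q0)" using q0(1,3) smpos by (simp add: field_simps)
        hence X: "\<kappa> / q0 - sm \<ge> \<kappa> / (2 * q0)" by (simp add: field_simps)
        have Y: "\<kappa> / (2 * q0) > 0" using \<kappa> q0 by simp
        have "(\<kappa> / q0 - sm) * g q0 \<le> (\<kappa> / (2 * q0)) * g q0"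
          using X gq0 by (intro mult_right_mono_neg) auto
        also have "\<dots> \<le> (\<kappa> / (2 * q0)) * (- 1/2)" using Y gq0 by (intro mult_left_mono) auto
        finally have "mm * lm * ((\<kappa> / q0 - sm) * g q0) \<le> mm * lm * ((\<kappa> / (2 * q0)) * (- 1/2))"
          using assms(4) lm by (intro mult_left_mono) auto
        also have "\<dots> = - K / q0" unfolding K_def by (simp add: field_simps)
        finally have T2: "mm * lm * ((\<kappa> / q0 - sm) * g q0) \<le> - K / q0" .
        have "\<kappa> / q0 > 0" using \<kappa> q0(1) by simp
        hence "\<kappa> / q0 - sp > 0" using sp by linarith
        hence T1: "- mp * lp * (\<kappa> / q0 - sp) * f q0 \<le> 0" using fpos[OF q0(1)] lp assms(3) by simp
        have "q0 * (\<bar>SI\<bar> + 1) < K" using q0(4) by (simp add: field_simps)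
        hence "K / q0 > \<bar>SI\<bar> + 1" using q0(1) by (simp add: field_simps)
        moreover have "H q0 = - mp * lp * (\<kappa> / q0 - sp) * f q0 + mm * lm * ((\<kappa> / q0 - sm) * g q0) + SI"
          unfolding Hq by (simp add: mult.assoc)
        moreover have "SI \<le> \<bar>SI\<bar>" by simp
        ultimately have "H q0 < 0" using T1 T2 by linarith
        thus ?thesis using that q0 by auto
      qed
      obtain r0 where r0: "p < r0" "r0 < R" "\<And>x. r0 \<le> x \<Longrightarrow> x \<le> R \<Longrightarrow> H x < 0"
      proof -
        obtain s where s: "s > 0" "\<And>y. \<bar>y - R\<bar> < s \<Longrightarrow> H y < 0"
          using cont_sign_neg[OF Hcont[OF assms(2)] HR] by blast
        define r0 where "r0 = max (R - s / 2) ((p + R) / 2)"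
        have "p < r0" "r0 < R" using p s unfolding r0_def by (auto simp: max_def)
        moreover have "H x < 0" if "r0 \<le> x" "x \<le> R" for x
        proof (rule s(2))
          have "R - s / 2 \<le> r0" unfolding r0_def by (rule max.cobounded1)
          hence "R - x < s" using that s(1) by linarith
          thus "\<bar>x - R\<bar> < s" using that(2) by simp
        qed
        ultimately show ?thesis using that by blast
      qed
      have Hr0: "H r0 < 0" using r0(3)[of r0] r0(2) by simp
      define Sa where "Sa = {q0..p} \<inter> H -` {0}"
      have "closed Sa" unfolding Sa_def by (rule continuous_closed_preimage[OF contH[OF q0(1)]]) auto
      moreover have "bounded Sa" unfolding Sa_def by (rule bounded_subset[of "{q0..p}"]) auto
      ultimately have "compact Sa" by (simp add: compact_eq_bounded_closed)
      moreover have "Sa \<noteq> {}"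
      proof -
        obtain z where "q0 \<le> z" "z \<le> p" "H z = 0"
          using IVT'[of H q0 0 p] q0 Hp contH[OF q0(1), of p] by auto
        thus ?thesis unfolding Sa_def by auto
      qed
      ultimately obtain a where a: "a \<in> Sa" "\<And>t. t \<in> Sa \<Longrightarrow> t \<le> a"
        using compact_attains_sup[of Sa] by blast
      have a1: "q0 \<le> a" "a \<le> p" "H a = 0" using a(1) unfolding Sa_def by auto
      have ap: "a < p" using a1 Hp by (cases "a = p") auto
      have apos: "\<And>x. a < x \<Longrightarrow> x \<le> p \<Longrightarrow> H x > 0"
      proof (rule ccontr)
        fix x assume x: "a < x" "x \<le> p" "\<not> H x > 0"
        obtain z where z: "x \<le> z" "z \<le> p" "H z = 0"
          using IVT'[of H x 0 p] x Hp contH[of x p] a1 q0 by auto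
        hence "z \<in> Sa" using x a1 unfolding Sa_def by auto
        thus False using a(2)[of z] z x by auto
      qed
      have unst: "ode_unstable H R a"
        by (rule unstable_crit[OF _ ap _ contH apos]) (use q0 a1 p in auto)
      define Sb where "Sb = {x \<in> {p..r0}. H x > 0}"
      define b where "b = Sup Sb"
      have pSb: "p \<in> Sb" using Hp r0(1) unfolding Sb_def by auto
      hence Sb_ne: "Sb \<noteq> {}" by blast
      have bdd: "bdd_above Sb" unfolding Sb_def by (rule bdd_aboveI[of _ r0]) auto
      have b_ge: "p \<le> b" unfolding b_def by (rule cSup_upper[OF pSb bdd])
      have b_le: "b \<le> r0" unfolding b_def by (rule cSup_least[OF Sb_ne]) (auto simp: Sb_def)
      have above: "H x \<le> 0" if "b < x" "x \<le> r0" for x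
      proof (rule ccontr)
        assume "\<not> H x \<le> 0"
        hence "x \<in> Sb" using that b_ge unfolding Sb_def by auto
        hence "x \<le> b" unfolding b_def by (rule cSup_upper[OF _ bdd])
        thus False using that by auto
      qed
      have approx: "\<exists>u\<in>Sb. b - e < u" if "e > 0" for e
        using less_cSupD[OF Sb_ne, of "b - e"] that unfolding b_def by auto
      have bpos: "b > 0" using b_ge p by auto
      have Hb: "H b = 0"
      proof -
        have "\<not> H b > 0"
        proof
          assume Hb: "H b > 0"
          obtain s where s: "s > 0" "\<And>y. \<bar>y - b\<bar> < s \<Longrightarrow> H y > 0"
            using cont_sign_pos[OF Hcont[OF bpos] Hb] by blast
          have "b \<noteq> r0" using Hb Hr0 by auto
          hence br: "b < r0" using b_le by auto
          define x where "x = b + min s (r0 - b) / 2"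
          define m where "m = min s (r0 - b)"
          have m: "0 < m" "m \<le> s" "m \<le> r0 - b" using br s(1) unfolding m_def by auto
          have xm: "x = b + m / 2" unfolding x_def m_def ..
          have "b < x" "x \<le> r0" "x - b < s" using m unfolding xm by linarith+
          hence "b < x" "x \<le> r0" "\<bar>x - b\<bar> < s" by auto
          hence "H x \<le> 0" "H x > 0" using above s(2) by auto
          thus False by linarith
        qed
        moreover have "\<not> H b < 0"
        proof
          assume Hb: "H b < 0"
          obtain s where s: "s > 0" "\<And>y. \<bar>y - b\<bar> < s \<Longrightarrow> H y < 0"
            using cont_sign_neg[OF Hcont[OF bpos] Hb] by blast
          obtain u where u: "u \<in> Sb" "b - s < u" using approx[OF s(1)] by blast
          have "u \<le> b" unfolding b_def by (rule cSup_upper[OF u(1) bdd])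
          hence "H u < 0" using s(2)[of u] u by auto
          thus False using u(1) unfolding Sb_def by auto
        qed
        ultimately show ?thesis by linarith
      qed
      have pb: "p < b" using b_ge Hb Hp by (cases "p = b") auto
      have br0: "b < r0" using b_le Hb Hr0 by (cases "b = r0") auto
      have stab: "ode_stable H R b"
      proof (rule stable_crit)
        show "0 < b" "b < R" using bpos br0 r0 by auto
        fix e :: real assume e: "e > 0"
        obtain u where u: "u \<in> Sb" "b - e < u" using approx[OF e] by blast
        have "u \<le> b" unfolding b_def by (rule cSup_upper[OF u(1) bdd])
        moreover have "H u > 0" "p \<le> u" using u(1) unfolding Sb_def by auto
        moreover have "u \<noteq> b" using \<open>H u > 0\<close> Hb by auto
        ultimately have "b - e < u \<and> u < b \<and> 0 < u \<and> 0 < H u" using u(2) p by auto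
        thus "\<exists>u. b - e < u \<and> u < b \<and> 0 < u \<and> 0 < H u" by blast
      next
        fix v assume v: "b < v" "v < R"
        show "H v \<le> 0"
        proof (cases "v \<le> r0")
          case True thus ?thesis using above v by auto
        next
          case False thus ?thesis using r0(3)[of v] v by auto
        qed
      qed
      define Z where "Z = {q \<in> {0<..<R}. H q = 0}"
      have aZ: "a \<in> Z" using a1 q0 p unfolding Z_def by auto
      have bZ: "b \<in> Z" using Hb bpos br0 r0 unfolding Z_def by auto
      have ab: "a < b" using ap pb by auto
      have card2: "ode_unstable H R a' \<and> ode_stable H R b'"
        if "card Z = 2" "a' \<in> Z" "b' \<in> Z" "a' < b'" for a' b'
      proof -
        have fin: "finite Z" using that(1) by (intro card_ge_0_finite) auto
        have sub: "{a, b} \<subseteq> Z" using aZ bZ by blast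
        have "card {a, b} = 2" using ab by simp
        hence "{a, b} = Z" using card_subset_eq[OF fin sub] that(1) by simp
        hence ab': "a' \<in> {a, b}" "b' \<in> {a, b}" using that(2,3) by auto
        have "a' = a" using ab' that(4) ab by auto
        moreover have "b' = b" using ab' that(4) ab by auto
        ultimately show ?thesis using unst stab by simp
      qed
      show "let H = calH d R mp mm rhop rhom alpha SI Sp Sm; Z = {q \<in> {0<..<R}. H q = 0}
            in (\<exists>a\<in>Z. \<exists>b\<in>Z. a \<noteq> b) \<and> (\<exists>a\<in>Z. \<exists>b\<in>Z. a \<noteq> b \<and> ode_unstable H R a \<and> ode_stable H R b) \<and>
               (card Z = 2 \<longrightarrow> (\<forall>a\<in>Z. \<forall>b\<in>Z. a < b \<longrightarrow> ode_unstable H R a \<and> ode_stable H R b))"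
        unfolding Let_def H_def[symmetric] Z_def[symmetric]
      proof (intro conjI)
        show "\<exists>a\<in>Z. \<exists>b\<in>Z. a \<noteq> b" using aZ bZ ab by (intro bexI[OF _ aZ] bexI[OF _ bZ]) simp
        show "\<exists>a\<in>Z. \<exists>b\<in>Z. a \<noteq> b \<and> ode_unstable H R a \<and> ode_stable H R b"
          using aZ bZ ab unst stab by (intro bexI[OF _ aZ] bexI[OF _ bZ]) simp
        show "card Z = 2 \<longrightarrow> (\<forall>a\<in>Z. \<forall>b\<in>Z. a < b \<longrightarrow> ode_unstable H R a \<and> ode_stable H R b)"
          using card2 by blast
      qed
    qed
  qed
qed

end
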